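(* On race-free networks of the session calculus, justness coincides with strong fairness of components: for every path starting in a race-free network, the path is just if and only if it is SC-fair.
   Context: Session calculus. Fix sets of locations $p,q,r,\dots$, labels $\lambda,\mu$ and recursion variables $X,Y$. Threads: $P ::= \mathbf{end} \mid \bigoplus_{i\in I} p_i!\lambda_i;P_i \mid \sum_{i\in I} p_i?\lambda_i;P_i \mid X \mid \mu X.P$, with $I$ finite (nonempty for $\bigoplus$) and expressions $\mu X.X$, $\mu X.\mu Y.P$ excluded. Networks: $N ::= p[\![P]\!] \mid 0 \mid N\parallel N$; in a network all locations are distinct, all threads are closed, and every location named in a send or receive is a location of $N$. Thread states additionally allow the form $\langle q!\lambda\rangle;P$ (an output already selected); network states are built from located thread states likewise, taken modulo the structural congruence $\equiv$ (associativity, commutativity of $\parallel$, $N\parallel 0\equiv N$). The transition relation is the least relation closed under $\equiv$ containing: (choice) $p[\![\bigoplus_{i\in I}p_i!\lambda_i;P_i]\!]\parallel N \xrightarrow{\tau} p[\![\langle p_k!\lambda_k\rangle;P_k]\!]\parallel N$ for $k\in I$; (unfold) $p[\![\mu X.P]\!]\parallel N\xrightarrow{\tau} p[\![P\{\mu X.P/X\}]\!]\parallel N$; (comm) $p_k[\![\langle q!\lambda_k\rangle;Q]\!]\parallel q[\![\sum_{i\in I}p_i?\lambda_i;P_i]\!]\parallel N \xrightarrow{(p_k,\lambda_k,q)} p_k[\![Q]\!]\parallel q[\![P_k]\!]\parallel N$ for $k\in I$. For a transition $t$, $\mathrm{comp}(t)$ is the single location moving in a $\tau$-transition and $\{p,q\}$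 for a label $(p,\lambda,q)$; $t$ involves $p$ if $p\in\mathrm{comp}(t)$; $t,u$ are concurrent if $\mathrm{comp}(t)\cap\mathrm{comp}(u)=\emptyset$. A path is a network state with a maximal (infinite or ending in a state without outgoing transitions) sequence of transitions. SC: location $p$ is enabled in a state if some transition from it involves $p$; relentlessly enabled on a path if every suffix contains a state where it is enabled. A path $\pi$ is SC-fair if for every suffix $\pi'$ and every location relentlessly enabled on $\pi'$, $\pi'$ contains a transition involving that location. Justness: $\pi$ is just if for every suffix of $\pi$ starting in state $s$ and every transition $t$ enabled in $s$, that suffix contains a transition $u$ not concurrent with $t$. A network state has a race if $N\xrightarrow{(p,\lambda,r)}N'$ and $N\xrightarrow{(q,\mu,r)}N''$ with $p\neq q$ or $N'\neq N''$; a network is race-free if no network state reachable from it has a race. *)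

theory Defs
  imports Main "HOL-Library.Extended_Nat"
begin

text \<open>A finite index set I is represented by a list of branches (location, label, continuation).
  Sel q lam P is the thread state \<langle>q!lam\<rangle>;P (an output already selected).
  Plain threads are the thread states without Sel.\<close>

datatype ('l, 'a, 'v) thread =
    End
  | Send "('l \<times> 'a \<times> ('l, 'a, 'v) thread) list"
  | Recv "('l \<times> 'a \<times> ('l, 'a, 'v) thread) list"
  | Var 'v
  | Mu 'v "('l, 'a, 'v) thread"
  | Sel 'l 'a "('l, 'a, 'v) thread"

text \<open>Substitution P{Q/X}; only ever used with a closed Q, so no capture can occur.\<close>
primrec subst :: "'v \<Rightarrow> ('l, 'a, 'v) thread \<Rightarrow> ('l, 'a, 'v) thread \<Rightarrow> ('l, 'a, 'v) thread" where
  "subst X Q End = End"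
| "subst X Q (Send bs) = Send (map (map_prod id (map_prod id (subst X Q))) bs)"
| "subst X Q (Recv bs) = Recv (map (map_prod id (map_prod id (subst X Q))) bs)"
| "subst X Q (Var Y) = (if Y = X then Q else Var Y)"
| "subst X Q (Mu Y P) = (if Y = X then Mu Y P else Mu Y (subst X Q P))"
| "subst X Q (Sel q a P) = Sel q a (subst X Q P)"

primrec fv :: "('l, 'a, 'v) thread \<Rightarrow> 'v set" where
  "fv End = {}"
| "fv (Send bs) = \<Union> (set (map (snd \<circ> snd) (map (map_prod id (map_prod id fv)) bs)))"
| "fv (Recv bs) = \<Union> (set (map (snd \<circ> snd) (map (map_prod id (map_prod id fv)) bs)))"
| "fv (Var Y) = {Y}"
| "fv (Mu Y P) = fv P - {Y}"
| "fv (Sel q a P) = fv P"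

primrec locs :: "('l, 'a, 'v) thread \<Rightarrow> 'l set" where
  "locs End = {}"
| "locs (Send bs) = fst ` set bs \<union> \<Union> (set (map (snd \<circ> snd) (map (map_prod id (map_prod id locs)) bs)))"
| "locs (Recv bs) = fst ` set bs \<union> \<Union> (set (map (snd \<circ> snd) (map (map_prod id (map_prod id locs)) bs)))"
| "locs (Var Y) = {}"
| "locs (Mu Y P) = locs P"
| "locs (Sel q a P) = insert q (locs P)"

primrec is_mu :: "('l, 'a, 'v) thread \<Rightarrow> bool" where
  "is_mu End = False"
| "is_mu (Send bs) = False"
| "is_mu (Recv bs) = False"
| "is_mu (Var Y) = False"
| "is_mu (Mu Y P) = True"
| "is_mu (Sel q a P) = False"

primrec wf_thread :: "('l, 'a, 'v) thread \<Rightarrow> bool" where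
  "wf_thread End = True"
| "wf_thread (Send bs) = (bs \<noteq> [] \<and> list_all id (map (snd \<circ> snd) (map (map_prod id (map_prod id wf_thread)) bs)))"
| "wf_thread (Recv bs) = list_all id (map (snd \<circ> snd) (map (map_prod id (map_prod id wf_thread)) bs))"
| "wf_thread (Var Y) = True"
| "wf_thread (Mu Y P) = (P \<noteq> Var Y \<and> \<not> is_mu P \<and> wf_thread P)"
| "wf_thread (Sel q a P) = False"

text \<open>A network state, taken modulo structural congruence (associativity, commutativity,
  unit 0), is exactly a finite partial map from (distinct) locations to thread states.\<close>
type_synonym ('l, 'a, 'v) net = "'l \<Rightarrow> ('l, 'a, 'v) thread option"

definition network :: "('l, 'a, 'v) net \<Rightarrow> bool" where
  "network N \<longleftrightarrow> finite (dom N) \<and>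
     (\<forall>p P. N p = Some P \<longrightarrow> wf_thread P \<and> fv P = {} \<and> locs P \<subseteq> dom N)"

datatype ('l, 'a) act = Tau 'l | Comm 'l 'a 'l

fun comp :: "('l, 'a) act \<Rightarrow> 'l set" where
  "comp (Tau p) = {p}"
| "comp (Comm p a q) = {p, q}"

inductive step :: "('l, 'a, 'v) net \<Rightarrow> ('l, 'a) act \<Rightarrow> ('l, 'a, 'v) net \<Rightarrow> bool" where
  choice: "N p = Some (Send bs) \<Longrightarrow> (q, a, P) \<in> set bs \<Longrightarrow>
             step N (Tau p) (N(p \<mapsto> Sel q a P))"
| unfold: "N p = Some (Mu X P) \<Longrightarrow> step N (Tau p) (N(p \<mapsto> subst X (Mu X P) P))"
| comm: "p \<noteq> q \<Longrightarrow> N p = Some (Sel q a Q) \<Longrightarrow> N q = Some (Recv bs) \<Longrightarrow> (p, a, P) \<in> set bs \<Longrightarrow>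
             step N (Comm p a q) (N(p \<mapsto> Q, q \<mapsto> P))"

text \<open>A path of length len (possibly infinite): states st 0, st 1, ... (indices i with i \<le> len)
  and actions ac i from st i to st (Suc i) for i < len; maximal, i.e. if finite the last state
  has no outgoing transitions.\<close>
definition is_path :: "(nat \<Rightarrow> ('l, 'a, 'v) net) \<Rightarrow> (nat \<Rightarrow> ('l, 'a) act) \<Rightarrow> enat \<Rightarrow> bool" where
  "is_path st ac len \<longleftrightarrow>
     (\<forall>i. enat i < len \<longrightarrow> step (st i) (ac i) (st (Suc i))) \<and>
     (\<forall>n. len = enat n \<longrightarrow> \<not> (\<exists>a s'. step (st n) a s'))"

definition enabled :: "'l \<Rightarrow> ('l, 'a, 'v) net \<Rightarrow> bool" where
  "enabled p s \<longleftrightarrow> (\<exists>a s'. step s a s' \<and> p \<in> comp a)"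

definition relentlessly_enabled ::
  "'l \<Rightarrow> (nat \<Rightarrow> ('l, 'a, 'v) net) \<Rightarrow> enat \<Rightarrow> nat \<Rightarrow> bool" where
  "relentlessly_enabled p st len k \<longleftrightarrow>
     (\<forall>m \<ge> k. enat m \<le> len \<longrightarrow> (\<exists>i \<ge> m. enat i \<le> len \<and> enabled p (st i)))"

definition sc_fair :: "(nat \<Rightarrow> ('l, 'a, 'v) net) \<Rightarrow> (nat \<Rightarrow> ('l, 'a) act) \<Rightarrow> enat \<Rightarrow> bool" where
  "sc_fair st ac len \<longleftrightarrow>
     (\<forall>k p. enat k \<le> len \<longrightarrow> relentlessly_enabled p st len k \<longrightarrow>
        (\<exists>j \<ge> k. enat j < len \<and> p \<in> comp (ac j)))"

definition just :: "(nat \<Rightarrow> ('l, 'a, 'v) net) \<Rightarrow> (nat \<Rightarrow> ('l, 'a) act) \<Rightarrow> enat \<Rightarrow> bool" where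
  "just st ac len \<longleftrightarrow>
     (\<forall>k a s'. enat k \<le> len \<longrightarrow> step (st k) a s' \<longrightarrow>
        (\<exists>j \<ge> k. enat j < len \<and> comp (ac j) \<inter> comp a \<noteq> {}))"

definition has_race :: "('l, 'a, 'v) net \<Rightarrow> bool" where
  "has_race N \<longleftrightarrow> (\<exists>p q r a b N' N''. step N (Comm p a r) N' \<and> step N (Comm q b r) N'' \<and>
                     (p \<noteq> q \<or> N' \<noteq> N''))"

definition reachable :: "('l, 'a, 'v) net \<Rightarrow> ('l, 'a, 'v) net \<Rightarrow> bool" where
  "reachable N M \<longleftrightarrow> (\<lambda>s s'. \<exists>a. step s a s')\<^sup>*\<^sup>* N M"

definition race_free :: "('l, 'a, 'v) net \<Rightarrow> bool" where
  "race_free N \<longleftrightarrow> (\<forall>M. reachable N M \<longrightarrow> \<not> has_race M)"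

end

theory Submission
  imports Defs
begin

lemma step_frame: "step s a s' \<Longrightarrow> x \<notin> comp a \<Longrightarrow> s' x = s x"
  by (induction rule: step.induct) auto

lemma step_local: "step s a s' \<Longrightarrow> (\<forall>x\<in>comp a. t x = s x) \<Longrightarrow> \<exists>t'. step t a t'"
proof (induction rule: step.induct)
  case (choice N p bs q a P) then show ?case by (auto intro: step.choice)
next
  case (unfold N p X P) then show ?case by (auto intro: step.unfold)
next
  case (comm p q N a Q bs P) then show ?case by (auto intro: step.comm)
qed

lemma step_comm_inv: "step s (Comm x b y) s' \<Longrightarrow>
   x \<noteq> y \<and> (\<exists>Q. s x = Some (Sel y b Q)) \<and> (\<exists>bs. s y = Some (Recv bs))"
  by (cases rule: step.cases) auto

lemma step_sel_inv: "step s a s' \<Longrightarrow> s p = Some (Sel q b Q) \<Longrightarrow> p \<in> comp a \<Longrightarrow> a = Comm p b q"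
  by (cases rule: step.cases) auto

lemma step_recv_inv: "step s a s' \<Longrightarrow> s p = Some (Recv bs) \<Longrightarrow> p \<in> comp a \<Longrightarrow> \<exists>r c. a = Comm r c p"
  by (cases rule: step.cases) auto

lemma frozen:
  assumes path: "is_path st ac len"
  shows "enat j \<le> len \<Longrightarrow> i \<le> j \<Longrightarrow> (\<forall>m. i \<le> m \<and> m < j \<longrightarrow> x \<notin> comp (ac m)) \<Longrightarrow> st j x = st i x"
proof (induction j)
  case 0 then show ?case by simp
next
  case (Suc j)
  show ?case
  proof (cases "i = Suc j")
    case True then show ?thesis by simp
  next
    case False
    then have ij: "i \<le> j" using Suc by simp
    have lt: "enat j < len" using Suc(2)
      by (metis Suc_ile_eq order_less_le_trans order_refl)
    then have "step (st j) (ac j) (st (Suc j))" using path unfolding is_path_def by blast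
    moreover have "x \<notin> comp (ac j)" using Suc ij by auto
    ultimately have "st (Suc j) x = st j x" by (rule step_frame)
    moreover have "st j x = st i x" using Suc ij lt by (auto simp: order_less_imp_le)
    ultimately show ?thesis by simp
  qed
qed

lemma reach:
  assumes path: "is_path st ac len"
  shows "enat i \<le> len \<Longrightarrow> reachable (st 0) (st i)"
proof (induction i)
  case 0 then show ?case by (simp add: reachable_def)
next
  case (Suc i)
  have lt: "enat i < len" using Suc(2)
    by (metis Suc_ile_eq order_less_le_trans order_refl)
  then have "step (st i) (ac i) (st (Suc i))" using path unfolding is_path_def by blast
  moreover have "reachable (st 0) (st i)" using Suc lt by (auto simp: order_less_imp_le)
  ultimately show ?case unfolding reachable_def
    by (metis (mono_tags, lifting) rtranclp.rtrancl_into_rtrancl)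
qed

theorem mainTheorem6:
  fixes N :: "('l, 'a, 'v) net"
    and st :: "nat \<Rightarrow> ('l, 'a, 'v) net" and ac :: "nat \<Rightarrow> ('l, 'a) act" and len :: enat
  assumes "network N"
    and "race_free N"
    and "is_path st ac len"
    and "st 0 = N"
  shows "just st ac len \<longleftrightarrow> sc_fair st ac len"
proof
  assume J: "just st ac len"
  show "sc_fair st ac len" unfolding sc_fair_def
  proof (intro allI impI)
    fix k p
    assume k: "enat k \<le> len" and R: "relentlessly_enabled p st len k"
    show "\<exists>j\<ge>k. enat j < len \<and> p \<in> comp (ac j)"
    proof (rule ccontr)
      assume nf: "\<not> (\<exists>j\<ge>k. enat j < len \<and> p \<in> comp (ac j))"
      obtain i where i: "i \<ge> k" "enat i \<le> len" "enabled p (st i)"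
        using R k unfolding relentlessly_enabled_def by blast
      obtain t s' where t: "step (st i) t s'" "p \<in> comp t"
        using i(3) unfolding enabled_def by blast
      define P where "P j \<longleftrightarrow> j \<ge> i \<and> enat j < len \<and> comp (ac j) \<inter> comp t \<noteq> {}" for j
      have "\<exists>j. P j" using J i(2) t(1) unfolding just_def P_def by blast
      then obtain j0 where j0: "P j0" and minj: "\<forall>m<j0. \<not> P m"
        using exists_least_iff[of P] by blast
      have j0i: "j0 \<ge> i" "enat j0 < len" "comp (ac j0) \<inter> comp t \<noteq> {}"
        using j0 unfolding P_def by auto
      have sj: "step (st j0) (ac j0) (st (Suc j0))"
        using assms(3) j0i(2) unfolding is_path_def by blast
      have same: "\<forall>x\<in>comp t. st j0 x = st i x"
      proof
        fix x assume x: "x \<in> comp t"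
        have "\<forall>m. i \<le> m \<and> m < j0 \<longrightarrow> x \<notin> comp (ac m)"
        proof (intro allI impI)
          fix m assume m: "i \<le> m \<and> m < j0"
          then have "enat m < len" using j0i(2) by (meson enat_ord_simps(2) order_less_trans)
          then show "x \<notin> comp (ac m)" using minj m x unfolding P_def by blast
        qed
        then show "st j0 x = st i x"
          using frozen[OF assms(3)] j0i by (simp add: order_less_imp_le)
      qed
      then obtain s'' where s'': "step (st j0) t s''" using step_local[OF t(1)] by metis
      have pn: "p \<notin> comp (ac j0)" using nf j0i i(1) by auto
      have rf: "\<not> has_race (st j0)"
        using assms(2,4) reach[OF assms(3)] j0i(2) unfolding race_free_def
        by (simp add: order_less_imp_le)
      show False
      proof (cases t)
        case (Tau p')
        then show ?thesis using t(2) j0i(3) pn by auto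
      next
        case (Comm x b y)
        from step_comm_inv[OF s''[unfolded Comm]] obtain Q bs where
          xy: "x \<noteq> y" "st j0 x = Some (Sel y b Q)" "st j0 y = Some (Recv bs)" by blast
        show ?thesis
        proof (cases "p = x")
          case True
          then have "y \<in> comp (ac j0)" using j0i(3) pn Comm by auto
          then obtain r c where rc: "ac j0 = Comm r c y" using step_recv_inv[OF sj xy(3)] by blast
          have a1: "step (st j0) (Comm x b y) s''" using s'' Comm by simp
          have a2: "step (st j0) (Comm r c y) (st (Suc j0))" using sj rc by simp
          have "r = x"
          proof (rule ccontr)
            assume "r \<noteq> x"
            then have "has_race (st j0)" unfolding has_race_def using a1 a2 by blast
            then show False using rf by simp
          qed
          then show False using pn rc True by simp
        next
          case False
          then have "p = y" using t(2) Comm by auto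
          then have "x \<in> comp (ac j0)" using j0i(3) pn Comm by auto
          then have "ac j0 = Comm x b y" using step_sel_inv[OF sj xy(2)] by blast
          then show False using pn \<open>p = y\<close> by simp
        qed
      qed
    qed
  qed
next
  assume F: "sc_fair st ac len"
  show "just st ac len" unfolding just_def
  proof (intro allI impI)
    fix k a s'
    assume k: "enat k \<le> len" and s: "step (st k) a s'"
    show "\<exists>j\<ge>k. enat j < len \<and> comp (ac j) \<inter> comp a \<noteq> {}"
    proof (rule ccontr)
      assume nj: "\<not> (\<exists>j\<ge>k. enat j < len \<and> comp (ac j) \<inter> comp a \<noteq> {})"
      obtain p where p: "p \<in> comp a" by (cases a) auto
      have en: "enabled p (st m)" if "m \<ge> k" "enat m \<le> len" for m
      proof -
        have "\<forall>x\<in>comp a. st m x = st k x"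
        proof
          fix x assume x: "x \<in> comp a"
          have "\<forall>j. k \<le> j \<and> j < m \<longrightarrow> x \<notin> comp (ac j)"
          proof (intro allI impI)
            fix j assume j: "k \<le> j \<and> j < m"
            then have "enat j < len" using that(2) by (meson enat_ord_simps(2) order_less_le_trans)
            then show "x \<notin> comp (ac j)" using nj j x by blast
          qed
          then show "st m x = st k x" using frozen[OF assms(3)] that by blast
        qed
        then obtain t' where "step (st m) a t'" using step_local[OF s] by metis
        then show ?thesis using p unfolding enabled_def by blast
      qed
      have "relentlessly_enabled p st len k"
        unfolding relentlessly_enabled_def using en by blast
      then obtain j where "j \<ge> k" "enat j < len" "p \<in> comp (ac j)"
        using F k unfolding sc_fair_def by blast
      then show False using nj p by blast
    qed
  qed
qed

end
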